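(* Let $(a_n)_{n\ge 0}$ be the $0/1$ sequence with $a_n=1$ if $n+1$ is a power of $2$ (i.e. $n=2^k-1$ for some integer $k\ge 0$) and $a_n=0$ otherwise. Call a permutation $\pi$ of $\{0,1,\dots,n-1\}$ nimble if for every $i\in\{0,\dots,n-1\}$ the number $i+\pi(i)+1$ is a power of $2$. Then for every integer $n\ge 1$ there exists a unique nimble permutation $\pi_n$ of $\{0,1,\dots,n-1\}$, and $$\det\left(a_{i+j}\right)_{i,j=0}^{n-1}=\operatorname{sgn}(\pi_n)\,a_{0+\pi_n(0)}a_{1+\pi_n(1)}\cdots a_{n-1+\pi_n(n-1)}=(-1)^{\binom{n}{2}}.$$
   Context: $a_n$ coincides with the Catalan number $C_n=\frac{1}{n+1}\binom{2n}{n}$ reduced modulo $2$ and regarded as an integer in $\{0,1\}$. A permutation is nimble exactly when $a_{0+\pi(0)}\cdots a_{n-1+\pi(n-1)}\neq 0$. *)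

theory Defs
  imports "HOL-Combinatorics.Permutations" "Jordan_Normal_Form.Determinant"
begin

definition is_pow2 :: "nat \<Rightarrow> bool" where
  "is_pow2 m \<longleftrightarrow> (\<exists>k::nat. m = 2 ^ k)"

definition a_seq :: "nat \<Rightarrow> int" where
  "a_seq m = (if is_pow2 (m + 1) then 1 else 0)"

definition nimble :: "nat \<Rightarrow> (nat \<Rightarrow> nat) \<Rightarrow> bool" where
  "nimble n p \<longleftrightarrow> p permutes {..<n} \<and> (\<forall>i<n. is_pow2 (i + p i + 1))"

definition hankel_a :: "nat \<Rightarrow> int mat" where
  "hankel_a n = mat n n (\<lambda>(i, j). a_seq (i + j))"

end

theory Submission
  imports Defs
begin

lemma pow2_unique:
  assumes "is_pow2 x" "N = 2^k" "N < 2*x" "x < 2*N"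
  shows "x = N"
proof -
  obtain j where j: "x = 2^j" using assms(1) unfolding is_pow2_def by auto
  have "(2::nat)^k < 2^(Suc j)" using assms j by simp
  then have "k < Suc j" using power_less_imp_less_exp[of "2::nat" k "Suc j"] by linarith
  moreover have "(2::nat)^j < 2^(Suc k)" using assms j by simp
  then have "j < Suc k" using power_less_imp_less_exp[of "2::nat" j "Suc k"] by linarith
  ultimately show ?thesis using assms j by (simp add: le_antisym less_Suc_eq_le)
qed

lemma exists_N:
  fixes n :: nat
  assumes "n \<ge> 1"
  shows "\<exists>k. n \<le> 2^k \<and> 2^k < 2*n"
proof -
  have ex: "\<exists>k. n \<le> (2::nat)^k" by (rule exI[of _ n]) (simp add: less_imp_le)
  define k where "k = (LEAST k. n \<le> (2::nat)^k)"
  have k1: "n \<le> 2^k" using LeastI_ex[OF ex] k_def by simp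
  have "2^k < 2*n"
  proof (cases k)
    case 0 then show ?thesis using assms by simp
  next
    case (Suc j)
    have "\<not> n \<le> 2^j" using not_less_Least[of j "\<lambda>k. n \<le> (2::nat)^k"] k_def Suc by simp
    then show ?thesis using Suc by simp
  qed
  then show ?thesis using k1 by blast
qed

lemma nimble_inv:
  assumes "nimble n p" shows "nimble n (inv_into UNIV p)"
proof -
  have pp: "p permutes {..<n}" using assms nimble_def by auto
  have "inv_into UNIV p permutes {..<n}" using permutes_inv[OF pp] .
  moreover have "is_pow2 (i + inv_into UNIV p i + 1)" if "i < n" for i
  proof -
    have "inv_into UNIV p i < n" using permutes_in_image[OF permutes_inv[OF pp]] that by simp
    then have "is_pow2 (inv_into UNIV p i + p (inv_into UNIV p i) + 1)" using assms nimble_def by auto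
    then show ?thesis using permutes_inverses(1)[OF pp] by (simp add: add.commute)
  qed
  ultimately show ?thesis unfolding nimble_def by auto
qed

lemma nimble_top:
  assumes "nimble n p" "N = 2^k" "n \<le> N" "N < 2*n" "i < n" "N - n \<le> i"
  shows "p i = N - 1 - i"
proof -
  have pp: "p permutes {..<n}" using assms nimble_def by auto
  have A: "q j = N - 1 - j" if "nimble n q" "j < n" "N < 2*j + 2" for q j
  proof -
    have "q j < n" using that nimble_def permutes_in_image by fastforce
    moreover have "is_pow2 (j + q j + 1)" using that nimble_def by auto
    ultimately have "j + q j + 1 = N" using pow2_unique[OF _ assms(2)] that assms by simp
    then show ?thesis by simp
  qed
  show ?thesis
  proof (cases "N < 2*i+2")
    case True then show ?thesis using A[OF assms(1) assms(5)] by simp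
  next
    case False
    define j where "j = N - 1 - i"
    have j1: "j < n" "N < 2*j+2" using False assms j_def by auto
    have "inv_into UNIV p j = N - 1 - j" using A[OF nimble_inv[OF assms(1)] j1] .
    then have "inv_into UNIV p j = i" using j_def False by simp
    then have "p i = j" using permutes_inverses(1)[OF pp, of j] by simp
    then show ?thesis using j_def by simp
  qed
qed

lemma perm_of_inj:
  assumes "finite S" "f ` S \<subseteq> S" "inj_on f S" "\<And>x. x \<notin> S \<Longrightarrow> f x = x"
  shows "f permutes S"
proof (rule bij_imp_permutes)
  show "bij_betw f S S" unfolding bij_betw_def using endo_inj_surj[OF assms(1-3)] assms(3) by simp
qed (use assms in auto)

lemma nimble_restrict:
  assumes nb: "nimble n p" and N: "N = 2^k" and nN: "n \<le> N" and Nn: "N < 2*n" and m: "m = N - n"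
  shows "nimble m (\<lambda>i. if i < m then p i else i)"
proof -
  have pp: "p permutes {..<n}" using nb nimble_def by auto
  have lt: "p i < m" if im: "i < m" for i
  proof (rule ccontr)
    assume ge: "\<not> p i < m"
    have "i < n" using im m Nn by linarith
    then have pin: "p i < n" using permutes_in_image[OF pp] by simp
    define j where "j = N - 1 - p i"
    have j1: "j < n" "N - n \<le> j" using j_def pin ge m nN by linarith+
    have "p j = N - 1 - j" using nimble_top[OF nb N nN Nn j1] .
    also have "\<dots> = p i" using j_def pin nN by linarith
    finally have "p j = p i" .
    then have "j = i" using permutes_inj[OF pp] by (simp add: inj_eq)
    then show False using j1(2) m im by linarith
  qed
  have "(\<lambda>i. if i < m then p i else i) permutes {..<m}"
  proof (rule perm_of_inj)
    show "inj_on (\<lambda>i. if i < m then p i else i) {..<m}"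
      using permutes_inj[OF pp] unfolding inj_on_def by (simp add: inj_eq)
    show "(\<lambda>i. if i < m then p i else i) ` {..<m} \<subseteq> {..<m}" using lt by auto
  qed simp_all
  moreover have "is_pow2 (i + (if i < m then p i else i) + 1)" if "i < m" for i
  proof -
    have "i < n" using that m Nn by linarith
    then show ?thesis using nb that unfolding nimble_def by simp
  qed
  ultimately show ?thesis unfolding nimble_def by auto
qed

lemma nimble_unique: "nimble n p \<Longrightarrow> nimble n q \<Longrightarrow> p = q"
proof (induction n arbitrary: p q rule: less_induct)
  case (less n)
  show ?case
  proof (cases "n = 0")
    case True then show ?thesis using less.prems nimble_def by simp
  next
    case False
    then obtain k where k: "n \<le> 2^k" "2^k < 2*n" using exists_N[of n] by auto
    define N where "N = (2::nat)^k"
    define m where "m = N - n"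
    have mn: "m < n" using k N_def m_def by simp
    have R: "(\<lambda>i. if i < m then p i else i) = (\<lambda>i. if i < m then q i else i)"
      using less.IH[OF mn nimble_restrict[OF less.prems(1) N_def _ _ m_def] nimble_restrict[OF less.prems(2) N_def _ _ m_def]]
        k N_def by simp
    have pp: "p permutes {..<n}" "q permutes {..<n}" using less.prems nimble_def by auto
    show ?thesis
    proof
      fix i
      show "p i = q i"
      proof (cases "i < m")
        case True then show ?thesis using fun_cong[OF R, of i] by simp
      next
        case False
        show ?thesis
        proof (cases "i < n")
          case True
          then show ?thesis using nimble_top[OF less.prems(1) N_def, of i] nimble_top[OF less.prems(2) N_def, of i]
            k N_def m_def False by simp
        next
          case False
          then show ?thesis using permutes_not_in[OF pp(1)] permutes_not_in[OF pp(2)] by simp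
        qed
      qed
    qed
  qed
qed

definition rv :: "nat \<Rightarrow> nat \<Rightarrow> nat \<Rightarrow> nat" where
  "rv a l i = (if a \<le> i \<and> i < a + l then 2*a + l - 1 - i else i)"

lemma rv_permutes: "rv a l permutes {a..<a+l}"
proof (rule perm_of_inj)
  show "inj_on (rv a l) {a..<a + l}" by (auto simp: inj_on_def rv_def)
qed (auto simp: rv_def)

lemma rv_step: "rv a (Suc (Suc l)) = transpose a (a+l+1) \<circ> rv (Suc a) l"
  by (auto simp: fun_eq_iff rv_def transpose_def)

lemma rv_sign: "sign (rv a l) = (-1) ^ (l div 2)"
proof (induction l arbitrary: a rule: less_induct)
  case (less l)
  show ?case
  proof (cases "l < 2")
    case True
    then have "rv a l = id" by (auto simp: fun_eq_iff rv_def)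
    then show ?thesis using True by simp
  next
    case False
    then obtain l' where l': "l = Suc (Suc l')" by (metis add_2_eq_Suc le_Suc_ex not_less)
    have pr: "permutation (rv (Suc a) l')" using rv_permutes permutation_permutes by blast
    have "sign (rv a l) = sign (transpose a (a+l'+1)) * sign (rv (Suc a) l')"
      using l' rv_step sign_compose[OF permutation_swap_id pr] by simp
    also have "\<dots> = - ((-1) ^ (l' div 2))" using less.IH[of l' "Suc a"] l' by (simp add: sign_swap_id)
    also have "\<dots> = (-1) ^ (l div 2)" using l' by simp
    finally show ?thesis .
  qed
qed

lemma choose_lem: "(m + 2*t) choose 2 = (m choose 2) + t * (2*m + 2*t - 1)"
proof -
  have "int (2 * ((m + 2*t) choose 2)) = int (2 * ((m choose 2) + t * (2*m + 2*t - 1)))"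
  proof (cases "m + t = 0")
    case True then show ?thesis by simp
  next
    case False
    have a: "2 * (x choose 2) = x * (x - 1)" for x :: nat
      by (cases x) (auto simp: choose_two)
    obtain x where x: "m+2*t = Suc x" using False by (cases "m+2*t") auto
    have "2 * ((m+2*t) choose 2) = Suc x * x" using a[of "Suc x"] x by simp
    then have "int (2 * ((m + 2*t) choose 2)) = (int x + 1) * int x" by (simp add: algebra_simps)
    moreover have "int (m+2*t) = int x + 1" using x by simp
    ultimately have A: "int (2 * ((m + 2*t) choose 2)) = int (m+2*t) * (int (m+2*t) - 1)" by simp
    have B: "int (2 * (m choose 2)) = int m * (int m - 1)"
      using a[of m] by (cases m) (auto simp: algebra_simps)
    have C: "int (2*m + 2*t - 1) = 2 * int m + 2 * int t - 1" using False by linarith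
    have "int (2 * ((m choose 2) + t * (2*m + 2*t - 1))) = int (2 * (m choose 2)) + 2 * int t * int (2*m + 2*t - 1)"
      by simp
    also have "\<dots> = int m * (int m - 1) + 2 * int t * (2 * int m + 2 * int t - 1)" by (simp only: B C)
    also have "\<dots> = int (m+2*t) * (int (m+2*t) - 1)" by (simp add: algebra_simps)
    finally show ?thesis using A by simp
  qed
  then have "2 * ((m + 2*t) choose 2) = 2 * ((m choose 2) + t * (2*m + 2*t - 1))" by (simp only: of_nat_eq_iff)
  then show ?thesis by simp
qed

lemma sign_arith:
  assumes "N = 2^k" "n \<le> N" "N < 2*n" "m = N - n"
  shows "(-1::int) ^ ((n - m) div 2) * (-1) ^ (m choose 2) = (-1) ^ (n choose 2)"
proof (cases k)
  case 0 then have "n = 1" "m = 0" using assms by auto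
  then show ?thesis by (simp add: choose_two)
next
  case (Suc j)
  define t where "t = n - 2^j"
  have nn: "n = m + 2*t" "2*m + 2*t - 1 = 2*(m+t-1) + 1 \<or> m + t = 0"
    using assms Suc t_def by auto
  have "(-1::int) ^ (n choose 2) = (-1) ^ (m choose 2) * ((-1) ^ (2*m + 2*t - 1)) ^ t"
  proof -
    have "n choose 2 = (m choose 2) + (2*m+2*t-1)*t" using nn(1) choose_lem[of m t] by simp
    then show ?thesis by (simp only: power_add power_mult)
  qed
  also have "((-1::int) ^ (2*m + 2*t - 1)) ^ t = (-1) ^ t"
    using nn(2) by (auto simp: power_add power_mult)
  finally show ?thesis using nn(1) by simp
qed



lemma nimble_exists: "\<exists>p. nimble n p \<and> sign p = (-1) ^ (n choose 2)"
proof (induction n rule: less_induct)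
  case (less n)
  show ?case
  proof (cases "n = 0")
    case True
    then show ?thesis by (intro exI[of _ id]) (simp add: nimble_def id_def choose_two)
  next
    case False
    then obtain k where k: "n \<le> 2^k" "2^k < 2*n" using exists_N[of n] by auto
    define N where "N = (2::nat)^k"
    define m where "m = N - n"
    have mn: "m < n" using k N_def m_def by simp
    obtain q where q: "nimble m q" "sign q = (-1) ^ (m choose 2)" using less.IH[OF mn] by blast
    have qp: "q permutes {..<m}" using q nimble_def by auto
    have rp: "rv m (n - m) permutes {m..<m + (n-m)}" by (rule rv_permutes)
    define p where "p = rv m (n - m) \<circ> q"
    have pp: "p permutes {..<n}" unfolding p_def
      by (rule permutes_compose[OF permutes_subset[OF qp] permutes_subset[OF rp]]) (use mn in auto)
    have pw: "is_pow2 (i + p i + 1)" if "i < n" for i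
    proof (cases "i < m")
      case True
      then have "q i < m" using permutes_in_image[OF qp] by simp
      then have "p i = q i" unfolding p_def rv_def by simp
      then show ?thesis using q(1) True unfolding nimble_def by simp
    next
      case False
      then have "q i = i" using permutes_not_in[OF qp] by simp
      then have "p i = N - 1 - i" unfolding p_def rv_def using False that m_def k N_def by auto
      then have "i + p i + 1 = N" using that k N_def by simp
      then show ?thesis unfolding is_pow2_def N_def by blast
    qed
    have "sign p = sign (rv m (n - m)) * sign q" unfolding p_def
      by (rule sign_compose) (use permutation_permutes qp rp in blast)+
    also have "\<dots> = (-1) ^ ((n - m) div 2) * (-1) ^ (m choose 2)" using rv_sign q(2) by simp
    also have "\<dots> = (-1) ^ (n choose 2)" using sign_arith[OF N_def _ _ m_def] k N_def by simp
    finally show ?thesis using pp pw unfolding nimble_def by blast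
  qed
qed

theorem theorem1p1:
  fixes n :: nat
  assumes "n \<ge> 1"
  shows "(\<exists>!p. nimble n p) \<and>
         (\<forall>p. nimble n p \<longrightarrow>
            det (hankel_a n) = sign p * (\<Prod>i<n. a_seq (i + p i)) \<and>
            sign p * (\<Prod>i<n. a_seq (i + p i)) = (-1) ^ (n choose 2))"
proof -
  obtain p0 where p0: "nimble n p0" "sign p0 = (-1) ^ (n choose 2)" using nimble_exists by blast
  have uniq: "\<And>p. nimble n p \<Longrightarrow> p = p0" using nimble_unique p0(1) by blast
  have prod1: "(\<Prod>i<n. a_seq (i + p i)) = 1" if "nimble n p" for p
    using that unfolding nimble_def a_seq_def by (simp add: add.assoc)
  have term0: "(\<Prod>i = 0..<n. hankel_a n $$ (i, p i)) = 0" if "p permutes {0..<n}" "p \<noteq> p0" for p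
  proof -
    have pn: "\<not> nimble n p" using uniq that(2) by blast
    have pp: "p permutes {..<n}" using that(1) by (simp add: lessThan_atLeast0)
    then obtain i where i: "i < n" "\<not> is_pow2 (i + p i + 1)" using pn unfolding nimble_def by blast
    have "p i < n" using permutes_in_image[OF pp] i by simp
    then have "hankel_a n $$ (i, p i) = 0" using i unfolding hankel_a_def a_seq_def by (simp add: add.assoc)
    then show ?thesis using i by (intro prod_zero) auto
  qed
  have p0p: "p0 permutes {0..<n}" using p0(1) unfolding nimble_def by (simp add: lessThan_atLeast0)
  have "det (hankel_a n) = (\<Sum>p \<in> {p. p permutes {0..<n}}. of_int (sign p) * (\<Prod>i = 0..<n. hankel_a n $$ (i, p i)))"
    unfolding det_def hankel_a_def by simp
  also have "\<dots> = of_int (sign p0) * (\<Prod>i = 0..<n. hankel_a n $$ (i, p0 i))"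
  proof -
    let ?f = "\<lambda>p. of_int (sign p) * (\<Prod>i = 0..<n. hankel_a n $$ (i, p i)) :: int"
    have "sum ?f {p. p permutes {0..<n}} = ?f p0 + sum ?f ({p. p permutes {0..<n}} - {p0})"
      by (rule sum.remove) (use p0p finite_permutations in auto)
    moreover have "sum ?f ({p. p permutes {0..<n}} - {p0}) = 0"
      by (rule sum.neutral) (use term0 in auto)
    ultimately show ?thesis by simp
  qed
  also have "(\<Prod>i = 0..<n. hankel_a n $$ (i, p0 i)) = (\<Prod>i<n. a_seq (i + p0 i))"
  proof -
    have "(\<Prod>i = 0..<n. hankel_a n $$ (i, p0 i)) = (\<Prod>i<n. hankel_a n $$ (i, p0 i))"
      by (simp add: lessThan_atLeast0)
    also have "\<dots> = (\<Prod>i<n. a_seq (i + p0 i))"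
    proof (rule prod.cong)
      fix i assume "i \<in> {..<n}"
      moreover have "p0 i < n" using permutes_in_image[OF p0p] \<open>i \<in> {..<n}\<close> by simp
      ultimately show "hankel_a n $$ (i, p0 i) = a_seq (i + p0 i)" unfolding hankel_a_def by simp
    qed simp
    finally show ?thesis .
  qed
  finally have D: "det (hankel_a n) = sign p0 * (\<Prod>i<n. a_seq (i + p0 i))" by simp
  show ?thesis
  proof (intro conjI allI impI)
    show "\<exists>!p. nimble n p" using p0(1) uniq by blast
  next
    fix p assume "nimble n p"
    then have "p = p0" using uniq by blast
    then show "det (hankel_a n) = sign p * (\<Prod>i<n. a_seq (i + p i))" using D by simp
  next
    fix p assume np: "nimble n p"
    then have "p = p0" using uniq by blast
    then show "sign p * (\<Prod>i<n. a_seq (i + p i)) = (-1) ^ (n choose 2)" using p0 prod1[OF np] by simp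
  qed
qed

end
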